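(* Assume $n_1\equiv\pm1\pmod 8$ and $n_2\equiv\pm1\pmod 8$. Then $-1\in D_1$ if and only if $n_2\equiv -1\pmod 8$.
   Context: Let $n_1,n_2$ be distinct odd primes, $n=n_1n_2$, $d=\gcd(n_1-1,n_2-1)$ and $e=(n_1-1)(n_2-1)/d$. Let $g_1,g_2$ be primitive roots modulo $n_1,n_2$ respectively, let $g$ be the integer modulo $n$ with $g\equiv g_1 \pmod{n_1}$, $g\equiv g_2\pmod{n_2}$, and let $\nu$ be the integer modulo $n$ with $\nu\equiv g\pmod{n_1}$, $\nu\equiv 1\pmod{n_2}$. It is known that every element of $\mathbb{Z}_n^*$ can be written uniquely as $g^s\nu^i$ with $0\le s\le e-1$, $0\le i\le d-1$. Define $D_1=\{g^{2s+1}\nu^i: 0\le s\le (e-2)/2,\ 0\le i\le d-1\}$. *)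

theory Defs
  imports "HOL-Number_Theory.Number_Theory"
begin

(* Elements of Z_n^* are represented by their least nonnegative residues in {0..<n}. *)
definition dD :: "nat \<Rightarrow> nat \<Rightarrow> nat" where
  "dD n1 n2 = gcd (n1 - 1) (n2 - 1)"

definition eE :: "nat \<Rightarrow> nat \<Rightarrow> nat" where
  "eE n1 n2 = (n1 - 1) * (n2 - 1) div dD n1 n2"

definition D1 :: "nat \<Rightarrow> nat \<Rightarrow> nat \<Rightarrow> nat \<Rightarrow> nat set" where
  "D1 n1 n2 g \<nu> = {(g ^ (2 * s + 1) * \<nu> ^ i) mod (n1 * n2) | s i.
      s \<le> (eE n1 n2 - 2) div 2 \<and> i \<le> dD n1 n2 - 1}"

end

theory Submission
  imports Defs
begin

lemma aux_b1: "odd (((n2::nat) - 1) div 2) \<Longrightarrow> n2 mod 8 = 1 \<or> n2 mod 8 = 7 \<Longrightarrow> n2 mod 8 = 7"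
  by presburger
lemma aux_b2: "(n2::nat) mod 8 = 7 \<Longrightarrow> odd ((n2 - 1) div 2)" by presburger
lemma aux_s: "(t::nat) = 2 * s + 1 \<Longrightarrow> t < e \<Longrightarrow> even e \<Longrightarrow> s \<le> (e - 2) div 2" by presburger
lemma aux_p: "odd (p::nat) \<Longrightarrow> (p - 1) div 2 + (p - 1) div 2 = p - 1" by presburger
lemma aux_t: "(t::nat) mod 2 = c mod 2 \<Longrightarrow> odd c \<Longrightarrow> odd t" by (metis odd_iff_mod_2_eq_one)

lemma half_pow:
  fixes p h :: nat
  assumes p: "prime p" "odd p" and r: "residue_primroot p h"
  shows "[h ^ ((p - 1) div 2) = p - 1] (mod p)"
proof -
  have p2: "p > 2" using p prime_ge_2_nat[of p] by (cases "p = 2") auto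
  have ordp: "ord p h = p - 1" using r p by (simp add: residue_primroot_def totient_prime)
  have cop: "coprime p h" using r by (simp add: residue_primroot_def)
  define x where "x = h ^ ((p - 1) div 2)"
  have xx: "x * x = h ^ (p - 1)"
  proof -
    have "(p - 1) div 2 + (p - 1) div 2 = p - 1" using p(2) by (rule aux_p)
    thus ?thesis unfolding x_def by (metis power_add)
  qed
  have "[x * x = 1] (mod p)" unfolding xx using ord_divides[of h "p-1" p] ordp by simp
  hence c1: "[int x * int x = 1] (mod int p)" by (metis cong_int_iff of_nat_1 of_nat_mult)
  have hpos: "h > 0" using cop p2 by (cases "h = 0") auto
  have xpos: "int x > 0" using hpos x_def by simp
  have "[int x = 1] (mod int p) \<or> [int x = - 1] (mod int p)"
    using cong_square[OF _ xpos c1] p by simp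
  moreover have "\<not> [int x = 1] (mod int p)"
  proof
    assume "[int x = 1] (mod int p)"
    hence "[x = 1] (mod p)" by (metis cong_int_iff of_nat_1)
    moreover have "0 < (p - 1) div 2" "(p - 1) div 2 < ord p h" using p2 ordp by auto
    ultimately show False using ord_minimal[of "(p-1) div 2" p h] x_def by simp
  qed
  ultimately have "[int x = - 1] (mod int p)" by blast
  moreover have "[- 1 = int (p - 1)] (mod int p)" using p2
    by (simp add: cong_iff_dvd_diff of_nat_diff)
  ultimately have "[int x = int (p - 1)] (mod int p)" using cong_trans by blast
  thus ?thesis unfolding x_def by (metis cong_int_iff)
qed

lemma exp_cong:
  fixes p h :: nat
  assumes p: "prime p" and r: "residue_primroot p h"
  shows "[h ^ u = h ^ v] (mod p) \<longleftrightarrow> [u = v] (mod (p - 1))"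
proof -
  have ordp: "ord p h = p - 1" using r p by (simp add: residue_primroot_def totient_prime)
  have cop: "coprime p h" using r by (simp add: residue_primroot_def)
  show ?thesis using order_divides_expdiff[OF cop] ordp by simp
qed

theorem mainTheorem10:
  fixes n1 n2 g1 g2 g \<nu> :: nat
  assumes "prime n1" and "prime n2" and "odd n1" and "odd n2" and "n1 \<noteq> n2"
    and "residue_primroot n1 g1" and "residue_primroot n2 g2"
    and "[g = g1] (mod n1)" and "[g = g2] (mod n2)"
    and "[\<nu> = g] (mod n1)" and "[\<nu> = 1] (mod n2)"
    and "n1 mod 8 = 1 \<or> n1 mod 8 = 7"
    and "n2 mod 8 = 1 \<or> n2 mod 8 = 7"
  shows "(n1 * n2 - 1) \<in> D1 n1 n2 g \<nu> \<longleftrightarrow> n2 mod 8 = 7"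
proof -
  note A = assms
  define a where "a = n1 - 1"
  define b where "b = n2 - 1"
  define d where "d = dD n1 n2"
  define e where "e = eE n1 n2"
  define n where "n = n1 * n2"
  have n1g: "n1 \<ge> 3" using A(1,3) prime_ge_2_nat[of n1] by (cases "n1 = 2") auto
  have n2g: "n2 \<ge> 3" using A(2,4) prime_ge_2_nat[of n2] by (cases "n2 = 2") auto
  have cop: "coprime n1 n2" using A(1,2,5) by (simp add: primes_coprime)
  have ea: "even a" "even b" using A(3,4) a_def b_def n1g n2g by auto
  have dd: "d = gcd b a" unfolding d_def dD_def a_def b_def by (simp add: gcd.commute)
  have dpos: "d > 0" using dd n2g b_def by simp
  have e0: "e = a * b div d" unfolding e_def eE_def a_def b_def d_def by simp
  have "d dvd a" "d dvd b" using dd by auto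
  have ee: "e = (a div d) * b"
    using e0 div_mult_swap[OF \<open>d dvd a\<close>, of b] by (simp add: mult.commute)
  have ee2: "e = a * (b div d)"
    using e0 div_mult_swap[OF \<open>d dvd b\<close>, of a] by simp
  have bdve: "b dvd e" using ee by simp
  have advde: "a dvd e" using ee2 by simp
  have "b div d > 0" using dd n2g b_def dpos by (simp add: div_greater_zero_iff gcd_le1_nat)
  hence epos: "e > 0" using ee2 n1g a_def by simp
  have eev: "even e" using bdve ea by (meson dvd_trans)
  have N1: "[n - 1 = n1 - 1] (mod n1)"
  proof -
    have "n - 1 = (n2 - 1) * n1 + (n1 - 1)" unfolding n_def using n1g n2g
      by (simp add: algebra_simps diff_mult_distrib)
    thus ?thesis by (simp add: cong_def)
  qed
  have N2: "[n - 1 = n2 - 1] (mod n2)"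
  proof -
    have "n - 1 = (n1 - 1) * n2 + (n2 - 1)" unfolding n_def using n1g n2g
      by (simp add: algebra_simps diff_mult_distrib)
    thus ?thesis by (simp add: cong_def)
  qed
  have H1: "[g1 ^ (a div 2) = n1 - 1] (mod n1)" using half_pow[OF A(1,3,6)] a_def by simp
  have H2: "[g2 ^ (b div 2) = n2 - 1] (mod n2)" using half_pow[OF A(2,4,7)] b_def by simp
  have M2: "[g ^ t * \<nu> ^ i = g2 ^ t] (mod n2)" for t i
  proof -
    have "[g ^ t * \<nu> ^ i = g2 ^ t * 1 ^ i] (mod n2)"
      by (intro cong_mult cong_pow A(9,11))
    thus ?thesis by simp
  qed
  have M1: "[g ^ t * \<nu> ^ i = g1 ^ (t + i)] (mod n1)" for t i
  proof -
    have "[\<nu> = g1] (mod n1)" using A(8,10) cong_trans by blast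
    hence "[g ^ t * \<nu> ^ i = g1 ^ t * g1 ^ i] (mod n1)"
      by (intro cong_mult cong_pow A(8))
    thus ?thesis by (simp add: power_add)
  qed
  show ?thesis
  proof
    assume "(n1 * n2 - 1) \<in> D1 n1 n2 g \<nu>"
    then obtain s i where si: "(g ^ (2 * s + 1) * \<nu> ^ i) mod n = n - 1"
      unfolding D1_def n_def by auto
    have "[g ^ (2 * s + 1) * \<nu> ^ i = n - 1] (mod n2)"
      using si unfolding n_def by (metis cong_mod_left cong_modulus_mult_nat cong_refl mult.commute)
    hence "[g2 ^ (2 * s + 1) = n2 - 1] (mod n2)" using M2 N2 by (meson cong_sym cong_trans)
    hence "[g2 ^ (2 * s + 1) = g2 ^ (b div 2)] (mod n2)" using H2 by (meson cong_sym cong_trans)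
    hence "[2 * s + 1 = b div 2] (mod b)" using exp_cong[OF A(2,7)] unfolding b_def by blast
    hence "[2 * s + 1 = b div 2] (mod 2)" using ea cong_dvd_modulus_nat by blast
    hence "(b div 2) mod 2 = 1" by (simp add: cong_def)
    hence "odd (b div 2)" by (simp only: odd_iff_mod_2_eq_one)
    thus "n2 mod 8 = 7" using A(13) aux_b1 unfolding b_def by blast
  next
    assume n27: "n2 mod 8 = 7"
    have bodd: "odd (b div 2)" using n27 aux_b2 unfolding b_def by blast
    define D0 where "D0 = a div 2 + a * b - b div 2"
    have "a \<ge> 1" using n1g a_def by simp
    hence "b \<le> a * b" by simp
    hence "b div 2 \<le> a * b" using div_le_dividend[of b 2] by linarith
    hence D0': "D0 + b div 2 = a div 2 + a * b" unfolding D0_def by simp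
    define i where "i = D0 mod d"
    define DD where "DD = D0 - i"
    have "d dvd DD" unfolding DD_def i_def by (simp add: minus_mod_eq_mult_div)
    then obtain x where x: "[b * x = DD] (mod a)" using cong_solve_dvd_nat[of b a DD] dd by auto
    define t where "t = (b * x + b div 2) mod e"
    have tmod: "[t = b * x + b div 2] (mod e)" unfolding t_def by simp
    have ta: "[t = b * x + b div 2] (mod a)" using tmod advde cong_dvd_modulus_nat by blast
    have tb: "[t = b div 2] (mod b)"
    proof -
      have "[t = b * x + b div 2] (mod b)" using tmod bdve cong_dvd_modulus_nat by blast
      moreover have "[b * x + b div 2 = b div 2] (mod b)" by (simp add: cong_def)
      ultimately show ?thesis using cong_trans by blast
    qed
    have t2: "odd t"
    proof -
      have "[t = b div 2] (mod 2)" using tb ea cong_dvd_modulus_nat by blast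
      thus ?thesis using bodd aux_t unfolding cong_def by blast
    qed
    have tle: "t < e" unfolding t_def using epos by simp
    have il: "i < d" unfolding i_def using dpos by simp
    have ti: "[t + i = a div 2] (mod a)"
    proof -
      have "[t + i = b * x + b div 2 + i] (mod a)" using ta by (simp add: cong_add)
      moreover have "[b * x + b div 2 + i = DD + b div 2 + i] (mod a)" using x by (simp add: cong_add)
      moreover have "DD + b div 2 + i = a div 2 + a * b"
      proof -
        have "i \<le> D0" unfolding i_def by simp
        hence "DD + b div 2 + i = D0 + b div 2" unfolding DD_def by simp
        thus ?thesis using D0' by simp
      qed
      moreover have "[a div 2 + a * b = a div 2] (mod a)" by (simp add: cong_def)
      ultimately show ?thesis by (metis cong_trans)
    qed
    define X where "X = g ^ t * \<nu> ^ i"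
    have X1: "[X = n1 - 1] (mod n1)"
    proof -
      have "[g1 ^ (t + i) = g1 ^ (a div 2)] (mod n1)" using exp_cong[OF A(1,6)] ti a_def by simp
      thus ?thesis using M1 H1 X_def by (meson cong_trans)
    qed
    have X2: "[X = n2 - 1] (mod n2)"
    proof -
      have "[g2 ^ t = g2 ^ (b div 2)] (mod n2)" using exp_cong[OF A(2,7)] tb b_def by simp
      thus ?thesis using M2 H2 X_def by (meson cong_trans)
    qed
    have "[X = n - 1] (mod n)" unfolding n_def
      using X1 X2 N1 N2 cop by (metis cong_sym cong_trans n_def coprime_cong_mult_nat)
    hence Xm: "X mod n = n - 1" using n1g n2g unfolding n_def by (simp add: cong_def)
    obtain s where s: "t = 2 * s + 1" using t2 by (metis oddE)
    have sle: "s \<le> (e - 2) div 2" using aux_s[OF s tle eev] .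
    have ile: "i \<le> d - 1" using il by simp
    show "(n1 * n2 - 1) \<in> D1 n1 n2 g \<nu>"
    proof -
      have "n1 * n2 - 1 = (g ^ (2 * s + 1) * \<nu> ^ i) mod (n1 * n2)"
        using Xm X_def s n_def by simp
      thus ?thesis unfolding D1_def using sle ile e_def d_def by blast
    qed
  qed
qed

end
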